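(* Let $\Phi:\mathbb{R}^N\to\mathbb{R}^M$ and $L:\mathbb{R}^P\to\mathbb{R}^N$ be linear operators, let $\|\cdot\|_A$ be a norm on $\mathbb{R}^P$ with dual norm $\|\cdot\|_A^*$, and set $R(x)=\|L^*x\|_A$. Let $x_0\in\mathbb{R}^N$, assume $\|\cdot\|_A$ is decomposable at $u_0=L^*x_0$ with associated subspace $T_0$ and vector $e_0\in T_0$, and let $S_0=T_0^\perp$. Assume $\Phi$ is injective on $\ker(L_{S_0}^* )$ and that $\mathrm{IC}_{\bar u,\bar z}(T_0,e_0)<1$, where $(\bar u,\bar z)$ is a minimizer of $\mathrm{IC}_{u,z}(T_0,e_0)$ over all $u\in\ker(L_{S_0})$ and all $z\in\mathbb{R}^M$ with $\Phi^*z\in\mathrm{Im}(L_{S_0})$. Set $\eta=\Phi\,\Xi\,L_{T_0}e_0+\bar z$. Then there exists $\alpha\in\partial\|\cdot\|_A(L^*x_0)$ with $\Phi^*\eta=L\alpha$ and $\|\alpha_{S_0}\|_A^*<1$. Moreover, there exist constants $C_1>0$, $C_2>0$, independent of $\eta$ and $\alpha$, such that for every $\varepsilon>0$, every $w\in\mathbb{R}^M$ with $\|w\|_2\le\varepsilon$, $y=\Phi x_0+w$, every $c>0$ and $\lambda=c\varepsilon$, any minimizer $x^\star$ of $\min_{x\in\mathbb{R}^N}\tfrac12\|y-\Phi x\|_2^2+\lambda R(x)$ satisfies $$\|x^\star-x_0\|_2\le C\varepsilon,\qquad C=C_1\bigl(2+c\|\eta\|_2\bigr)+C_2\frac{(1+c\|\eta\|_2/2)^2}{c\,\bigl(1-\mathrm{IC}_{\bar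 u,\bar z}(T_0,e_0)\bigr)}.$$
   Context: For a subspace $V\subset\mathbb{R}^P$, $P_V$ denotes the orthogonal projector onto $V$, and $L_V=LP_V$, $L_V^*=P_VL^*$, $\alpha_V=P_V\alpha$ for $\alpha\in\mathbb{R}^P$. A norm $\|\cdot\|_A$ on $\mathbb{R}^P$ is decomposable at $u\in\mathbb{R}^P$ if (i) there exist a subspace $T\subset\mathbb{R}^P$ and a vector $e\in T$ such that $\partial\|\cdot\|_A(u)=\{\alpha\in\mathbb{R}^P:\ \alpha_T=e,\ \|\alpha_{T^\perp}\|_A^*\le 1\}$, and (ii) for every $z\in T^\perp$, $\|z\|_A=\sup\{\langle v,z\rangle: v\in T^\perp,\ \|v\|_A^*\le 1\}$. Irrepresentability criterion: for a subspace $T\subset\mathbb{R}^P$, $e\in\mathbb{R}^P$, $S=T^\perp$, with $\Phi$ injective on $\ker(L_S^* )$, define $\Xi:\mathbb{R}^N\to\ker(L_S^* )$ by $\Xi h=\operatorname{argmin}_{x\in\ker(L_S^* )}\tfrac12\|\Phi x\|_2^2-\langle h,x\rangle$, define $\Gamma=(L_S)^+(\Phi^*\Phi\,\Xi-\mathrm{Id})L_T$ where $M^+$ is the Moore–Penrose pseudoinverse, and for $u\in\ker(L_S)$ and $z\in\mathbb{R}^M$ with $\Phi^*z\in\mathrm{Im}(L_S)$ set $\mathrm{IC}_{u,z}(T,e)=\|\Gamma e+u_S+(L_S)^+\Phi^*z\|_A^*$. *)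

theory Defs
  imports "HOL-Analysis.Analysis"
begin

definition is_norm :: "('a::real_vector \<Rightarrow> real) \<Rightarrow> bool" where
  "is_norm nA \<longleftrightarrow> (\<forall>x. nA x \<ge> 0) \<and> (\<forall>x. nA x = 0 \<longleftrightarrow> x = 0)
     \<and> (\<forall>c x. nA (scaleR c x) = \<bar>c\<bar> * nA x) \<and> (\<forall>x y. nA (x + y) \<le> nA x + nA y)"

definition dual_norm :: "('a::real_inner \<Rightarrow> real) \<Rightarrow> 'a \<Rightarrow> real" where
  "dual_norm nA \<alpha> = Sup {inner \<alpha> x | x. nA x \<le> 1}"

definition subdiff :: "('a::real_inner \<Rightarrow> real) \<Rightarrow> 'a \<Rightarrow> 'a set" where
  "subdiff f u = {\<alpha>. \<forall>v. f v \<ge> f u + inner \<alpha> (v - u)}"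

definition proj :: "'a::real_inner set \<Rightarrow> 'a \<Rightarrow> 'a" where
  "proj V x = (THE v. v \<in> V \<and> (\<forall>w\<in>V. inner (x - v) w = 0))"

definition ker :: "('a::real_vector \<Rightarrow> 'b::real_vector) \<Rightarrow> 'a set" where
  "ker f = {x. f x = 0}"

definition pinv :: "('a::euclidean_space \<Rightarrow> 'b::euclidean_space) \<Rightarrow> 'b \<Rightarrow> 'a" where
  "pinv f y = (THE x. x \<in> orthogonal_comp (ker f) \<and> f x = proj (range f) y)"

definition decomposable_at :: "('a::euclidean_space \<Rightarrow> real) \<Rightarrow> 'a \<Rightarrow> 'a set \<Rightarrow> 'a \<Rightarrow> bool" where
  "decomposable_at nA u T e \<longleftrightarrow> subspace T \<and> e \<in> T \<and>
     subdiff nA u = {\<alpha>. proj T \<alpha> = e \<and> dual_norm nA (proj (orthogonal_comp T) \<alpha>) \<le> 1} \<and>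
     (\<forall>z\<in>orthogonal_comp T.
        nA z = Sup {inner v z | v. v \<in> orthogonal_comp T \<and> dual_norm nA v \<le> 1})"

definition Xi :: "('n::euclidean_space \<Rightarrow> 'm::euclidean_space) \<Rightarrow> ('p::euclidean_space \<Rightarrow> 'n)
                  \<Rightarrow> 'p set \<Rightarrow> 'n \<Rightarrow> 'n" where
  "Xi \<Phi> L S h = (THE x. x \<in> ker (\<lambda>x. proj S (adjoint L x)) \<and>
      (\<forall>x'\<in>ker (\<lambda>x. proj S (adjoint L x)).
          (1/2) * (norm (\<Phi> x))\<^sup>2 - inner h x \<le> (1/2) * (norm (\<Phi> x'))\<^sup>2 - inner h x'))"

definition Gamma :: "('n::euclidean_space \<Rightarrow> 'm::euclidean_space) \<Rightarrow> ('p::euclidean_space \<Rightarrow> 'n)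
                  \<Rightarrow> 'p set \<Rightarrow> 'p \<Rightarrow> 'p" where
  "Gamma \<Phi> L T v = (let S = orthogonal_comp T in
      pinv (\<lambda>a. L (proj S a))
        (adjoint \<Phi> (\<Phi> (Xi \<Phi> L S (L (proj T v)))) - L (proj T v)))"

definition IC :: "('p::euclidean_space \<Rightarrow> real) \<Rightarrow> ('n::euclidean_space \<Rightarrow> 'm::euclidean_space)
                  \<Rightarrow> ('p \<Rightarrow> 'n) \<Rightarrow> 'p \<Rightarrow> 'm \<Rightarrow> 'p set \<Rightarrow> 'p \<Rightarrow> real" where
  "IC nA \<Phi> L u z T e = (let S = orthogonal_comp T in
      dual_norm nA (Gamma \<Phi> L T e + proj S u + pinv (\<lambda>a. L (proj S a)) (adjoint \<Phi> z)))"

end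

theory Submission
  imports Defs
begin


lemma proj_ex:
  fixes V :: "'a::euclidean_space set"
  assumes "subspace V"
  shows "\<exists>!v. v \<in> V \<and> (\<forall>w\<in>V. inner (x - v) w = 0)"
proof -
  obtain a b where ab: "x = a + b" "a \<in> V" "b \<in> orthogonal_comp V"
    using subspace_sum_orthogonal_comp[OF assms] set_plus_elim
    by (metis UNIV_I)
  have ex: "a \<in> V \<and> (\<forall>w\<in>V. inner (x - a) w = 0)"
    using ab by (auto simp: orthogonal_comp_def orthogonal_def inner_commute)
  show ?thesis
  proof (rule ex1I[of _ a])
    show "a \<in> V \<and> (\<forall>w\<in>V. inner (x - a) w = 0)" by (fact ex)
  next
    fix v assume v: "v \<in> V \<and> (\<forall>w\<in>V. inner (x - v) w = 0)"
    have "a - v \<in> V" using v ab assms by (simp add: subspace_diff)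
    then have "inner (x - v) (a - v) = 0" "inner (x - a) (a - v) = 0" using v ex by auto
    moreover have "inner (a - v) (a - v) = inner (x - v) (a - v) - inner (x - a) (a - v)"
      by (simp add: inner_diff_left)
    ultimately have "inner (a - v) (a - v) = 0" by simp
    then show "v = a" by simp
  qed
qed

lemma proj_char:
  fixes V :: "'a::euclidean_space set"
  assumes "subspace V"
  shows "proj V x \<in> V \<and> (\<forall>w\<in>V. inner (x - proj V x) w = 0)"
  unfolding proj_def by (rule theI'[OF proj_ex[OF assms]])

lemma proj_eqI:
  fixes V :: "'a::euclidean_space set"
  assumes "subspace V" "v \<in> V" "\<And>w. w\<in>V \<Longrightarrow> inner (x - v) w = 0"
  shows "proj V x = v"
  unfolding proj_def by (rule the1_equality[OF proj_ex[OF assms(1)]]) (use assms in auto)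

lemma proj_in: "subspace (V::'a::euclidean_space set) \<Longrightarrow> proj V x \<in> V"
  using proj_char by blast

lemma proj_orth: "subspace (V::'a::euclidean_space set) \<Longrightarrow> w \<in> V \<Longrightarrow> inner (x - proj V x) w = 0"
  using proj_char by blast

lemma proj_id: "subspace (V::'a::euclidean_space set) \<Longrightarrow> x \<in> V \<Longrightarrow> proj V x = x"
  by (rule proj_eqI) auto

lemma proj_zero: "subspace (V::'a::euclidean_space set) \<Longrightarrow> x \<in> orthogonal_comp V \<Longrightarrow> proj V x = 0"
  by (rule proj_eqI) (auto simp: subspace_0 orthogonal_comp_def orthogonal_def inner_commute)

lemma proj_comp:
  fixes V :: "'a::euclidean_space set"
  assumes V: "subspace V"
  shows "proj (orthogonal_comp V) x = x - proj V x"
proof (rule proj_eqI)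
  show "subspace (orthogonal_comp V)" by (rule subspace_orthogonal_comp)
  show "x - proj V x \<in> orthogonal_comp V"
    unfolding orthogonal_comp_def orthogonal_def
    using proj_orth[OF V] by (simp add: inner_commute)
  fix w assume w: "w \<in> orthogonal_comp V"
  have "proj V x \<in> V" by (rule proj_in[OF V])
  then have "inner (proj V x) w = 0" using w unfolding orthogonal_comp_def orthogonal_def by blast
  then show "inner (x - (x - proj V x)) w = 0" by simp
qed

lemma proj_sym:
  fixes V :: "'a::euclidean_space set"
  assumes "subspace V"
  shows "inner (proj V x) y = inner x (proj V y)"
proof -
  have 1: "inner (proj V x) (y - proj V y) = 0"
    using proj_orth[OF assms, of "proj V x" y] proj_in[OF assms] by (simp add: inner_commute)
  have 2: "inner (x - proj V x) (proj V y) = 0"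
    using proj_orth[OF assms] proj_in[OF assms] by blast
  from 1 2 show ?thesis by (simp add: inner_diff_right inner_diff_left)
qed

lemma proj_linear:
  fixes V :: "'a::euclidean_space set"
  assumes V: "subspace V"
  shows "linear (proj V)"
proof (rule linearI)
  fix x y
  show "proj V (x + y) = proj V x + proj V y"
  proof (rule proj_eqI[OF V])
    show "proj V x + proj V y \<in> V" using proj_in[OF V] V by (simp add: subspace_add)
    fix w assume w: "w \<in> V"
    have "inner (x + y - (proj V x + proj V y)) w = inner (x - proj V x) w + inner (y - proj V y) w"
      by (simp add: inner_diff_left inner_add_left)
    then show "inner (x + y - (proj V x + proj V y)) w = 0" using proj_orth[OF V w] by simp
  qed
next
  fix c x
  show "proj V (c *\<^sub>R x) = c *\<^sub>R proj V x"
  proof (rule proj_eqI[OF V])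
    show "c *\<^sub>R proj V x \<in> V" using proj_in[OF V] V by (simp add: subspace_scale)
    fix w assume w: "w \<in> V"
    have "inner (c *\<^sub>R x - c *\<^sub>R proj V x) w = c * inner (x - proj V x) w"
      by (simp add: inner_diff_left algebra_simps)
    then show "inner (c *\<^sub>R x - c *\<^sub>R proj V x) w = 0" using proj_orth[OF V w] by simp
  qed
qed



context
  fixes nA :: "'a::euclidean_space \<Rightarrow> real"
  assumes N: "is_norm nA"
begin

lemma nA_nonneg: "nA x \<ge> 0" using N by (simp add: is_norm_def)
lemma nA_zero: "nA 0 = 0" using N by (simp add: is_norm_def)
lemma nA_eq0: "nA x = 0 \<longleftrightarrow> x = 0" using N by (simp add: is_norm_def)
lemma nA_scale: "nA (c *\<^sub>R x) = \<bar>c\<bar> * nA x" using N by (simp add: is_norm_def)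
lemma nA_tri: "nA (x + y) \<le> nA x + nA y" using N by (simp add: is_norm_def)
lemma nA_minus: "nA (- x) = nA x" using nA_scale[of "-1" x] by simp
lemma nA_diff: "nA x - nA y \<le> nA (x - y)"
  using nA_tri[of "x - y" y] by simp

lemma nA_sum: "finite I \<Longrightarrow> nA (sum f I) \<le> (\<Sum>i\<in>I. nA (f i))"
proof (induction I rule: finite_induct)
  case empty then show ?case by (simp add: nA_zero)
next
  case (insert i I)
  then show ?case using nA_tri[of "f i" "sum f I"] by simp
qed

lemma nA_upper: "\<exists>M>0. \<forall>x. nA x \<le> M * norm x"
proof -
  define M where "M = 1 + (\<Sum>b\<in>Basis. nA b)"
  have M0: "M > 0" unfolding M_def using nA_nonneg by (simp add: add_pos_nonneg sum_nonneg)
  have "nA x \<le> M * norm x" for x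
  proof -
    have "nA x = nA (\<Sum>b\<in>Basis. (x \<bullet> b) *\<^sub>R b)" by (simp add: euclidean_representation)
    also have "\<dots> \<le> (\<Sum>b\<in>Basis. nA ((x \<bullet> b) *\<^sub>R b))" by (rule nA_sum) simp
    also have "\<dots> = (\<Sum>b\<in>Basis. \<bar>x \<bullet> b\<bar> * nA b)" by (simp add: nA_scale)
    also have "\<dots> \<le> (\<Sum>b\<in>Basis. norm x * nA b)"
      by (rule sum_mono) (simp add: Basis_le_norm mult_right_mono nA_nonneg)
    also have "\<dots> = norm x * (\<Sum>b\<in>Basis. nA b)" by (simp add: sum_distrib_left)
    also have "\<dots> \<le> M * norm x" unfolding M_def by (simp add: algebra_simps)
    finally show ?thesis .
  qed
  with M0 show ?thesis by blast
qed

lemma nA_lower: "\<exists>m>0. \<forall>x. m * norm x \<le> nA x"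
proof -
  obtain M where M: "M > 0" "\<And>x. nA x \<le> M * norm x" using nA_upper by blast
  have cont: "continuous_on (sphere 0 1) nA"
  proof (rule continuous_on_subset[of UNIV], rule continuous_on_iff[THEN iffD2], intro ballI allI impI)
    fix x and e :: real assume "e > 0"
    show "\<exists>d>0. \<forall>x'\<in>UNIV. dist x' x < d \<longrightarrow> dist (nA x') (nA x) < e"
    proof (intro exI[of _ "e / M"] conjI ballI impI)
      show "e / M > 0" using \<open>e>0\<close> M by simp
      fix y assume "dist y x < e / M"
      then have "M * norm (y - x) < e" using M by (simp add: dist_norm field_simps)
      moreover have "\<bar>nA y - nA x\<bar> \<le> M * norm (y - x)"
        using nA_diff[of y x] nA_diff[of x y] M(2)[of "y - x"] M(2)[of "x - y"]
        by (simp add: norm_minus_commute)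
      ultimately show "dist (nA y) (nA x) < e" by (simp add: dist_real_def)
    qed
  qed simp
  obtain b :: 'a where b: "b \<in> Basis" using nonempty_Basis by blast
  have "sphere (0::'a) 1 \<noteq> {}" using b by (auto simp: norm_Basis)
  then obtain x0 where x0: "x0 \<in> sphere 0 1" "\<And>y. y \<in> sphere 0 1 \<Longrightarrow> nA x0 \<le> nA y"
    using continuous_attains_inf[OF compact_sphere _ cont] by blast
  have "x0 \<noteq> 0" using x0 by auto
  then have m0: "nA x0 > 0" using nA_eq0 nA_nonneg by (metis less_eq_real_def)
  have "nA x0 * norm x \<le> nA x" for x
  proof (cases "x = 0")
    case True then show ?thesis by (simp add: nA_zero)
  next
    case False
    then have "(1 / norm x) *\<^sub>R x \<in> sphere 0 1" by simp
    then have "nA x0 \<le> nA ((1 / norm x) *\<^sub>R x)" by (rule x0(2))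
    also have "\<dots> = nA x / norm x" by (simp add: nA_scale)
    finally show ?thesis using False by (simp add: field_simps)
  qed
  with m0 show ?thesis by blast
qed

lemma dual_bdd: "bdd_above {inner \<alpha> x | x. nA x \<le> 1}"
proof -
  obtain m where m: "m > 0" "\<And>x. m * norm x \<le> nA x" using nA_lower by blast
  have "inner \<alpha> x \<le> norm \<alpha> / m" if "nA x \<le> 1" for x
  proof -
    have "norm x \<le> 1 / m" using m(2)[of x] that m(1) by (simp add: field_simps)
    then have "norm \<alpha> * norm x \<le> norm \<alpha> * (1 / m)" by (intro mult_left_mono) simp_all
    then show ?thesis using Cauchy_Schwarz_ineq2[of \<alpha> x] by simp
  qed
  then show ?thesis by (auto intro!: bdd_aboveI)
qed

lemma dual_leI: "(\<And>x. nA x \<le> 1 \<Longrightarrow> inner \<alpha> x \<le> b) \<Longrightarrow> dual_norm nA \<alpha> \<le> b"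
  unfolding dual_norm_def
  by (rule cSup_least) (auto intro: exI[of _ 0] simp: nA_zero)

lemma dual_upper: "nA x \<le> 1 \<Longrightarrow> inner \<alpha> x \<le> dual_norm nA \<alpha>"
  unfolding dual_norm_def by (rule cSup_upper[OF _ dual_bdd]) auto

lemma dual_zero: "dual_norm nA 0 = 0"
  using dual_leI[of 0 0] dual_upper[of 0 0] by (simp add: nA_zero)

lemma inner_le_dual: "inner \<alpha> z \<le> dual_norm nA \<alpha> * nA z"
proof (cases "z = 0")
  case True then show ?thesis by (simp add: nA_zero)
next
  case False
  then have p: "nA z > 0" using nA_eq0 nA_nonneg by (metis less_eq_real_def)
  have "nA ((1 / nA z) *\<^sub>R z) \<le> 1" using p by (simp add: nA_scale)
  then have "inner \<alpha> ((1 / nA z) *\<^sub>R z) \<le> dual_norm nA \<alpha>" by (rule dual_upper)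
  then show ?thesis using p by (simp add: field_simps)
qed

lemma subdiff_eq: "\<alpha> \<in> subdiff nA u \<Longrightarrow> inner \<alpha> u = nA u"
proof -
  assume a: "\<alpha> \<in> subdiff nA u"
  have 1: "nA 0 \<ge> nA u + inner \<alpha> (0 - u)" using a unfolding subdiff_def by blast
  have 2: "nA (2 *\<^sub>R u) \<ge> nA u + inner \<alpha> (2 *\<^sub>R u - u)" using a unfolding subdiff_def by blast
  have "2 *\<^sub>R u - u = u" by (simp add: scaleR_2)
  then show ?thesis using 1 2 by (simp add: nA_zero nA_scale)
qed

lemma subdiff_le: "\<alpha> \<in> subdiff nA u \<Longrightarrow> inner \<alpha> w \<le> nA w"
proof -
  assume a: "\<alpha> \<in> subdiff nA u"
  then have "nA w \<ge> nA u + inner \<alpha> (w - u)" by (simp add: subdiff_def)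
  then show ?thesis using subdiff_eq[OF a] by (simp add: inner_diff_right)
qed

end


lemma ker_subspace: "linear f \<Longrightarrow> subspace (ker f)"
  unfolding ker_def by (rule real_vector.linear_subspace_kernel)

lemma lin_PL: "linear L \<Longrightarrow> subspace (S::'p::euclidean_space set) \<Longrightarrow>
   linear (\<lambda>x. proj S (adjoint (L::'p \<Rightarrow> 'n::euclidean_space) x))"
  using linear_compose[OF adjoint_linear proj_linear, of L S] by (simp add: o_def)

lemma lin_LP: "linear L \<Longrightarrow> subspace (S::'p::euclidean_space set) \<Longrightarrow>
   linear (\<lambda>a. (L::'p \<Rightarrow> 'n::euclidean_space) (proj S a))"
  using linear_compose[OF proj_linear, of S L] by (simp add: o_def)

lemma orth_split:
  fixes K :: "'a::euclidean_space set"
  assumes "subspace K" "p \<in> K" "q \<in> orthogonal_comp K" "p + q = 0"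
  shows "p = 0" "q = 0"
proof -
  have "p = - q" using assms(4) by (simp add: eq_neg_iff_add_eq_0)
  then have "p \<in> orthogonal_comp K" using assms(3) subspace_orthogonal_comp
    by (metis subspace_neg)
  then show "p = 0" using orthogonal_Int_0[OF assms(1)] assms(2) by blast
  then show "q = 0" using assms(4) by simp
qed

lemma Xi_prop:
  fixes \<Phi> :: "'n::euclidean_space \<Rightarrow> 'm::euclidean_space" and L :: "'p::euclidean_space \<Rightarrow> 'n"
  assumes lPhi: "linear \<Phi>" and lL: "linear L" and S: "subspace S"
    and inj: "inj_on \<Phi> (ker (\<lambda>x. proj S (adjoint L x)))"
  shows "Xi \<Phi> L S h \<in> ker (\<lambda>x. proj S (adjoint L x)) \<and>
         (\<forall>y\<in>ker (\<lambda>x. proj S (adjoint L x)). inner (adjoint \<Phi> (\<Phi> (Xi \<Phi> L S h)) - h) y = 0)"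
proof -
  define K where "K = ker (\<lambda>x. proj S (adjoint L x))"
  have K: "subspace K" unfolding K_def by (rule ker_subspace[OF lin_PL[OF lL S]])
  have K': "subspace (orthogonal_comp K)" by (rule subspace_orthogonal_comp)
  have Phi0: "x \<in> K \<Longrightarrow> \<Phi> x = 0 \<Longrightarrow> x = 0" for x
    using inj K linear_0[OF lPhi] subspace_0[OF K] unfolding K_def inj_on_def by metis
  define M where "M x = proj K (adjoint \<Phi> (\<Phi> (proj K x))) + proj (orthogonal_comp K) x" for x
  have lM: "linear M"
  proof -
    have "linear (proj K \<circ> adjoint \<Phi> \<circ> \<Phi> \<circ> proj K)"
      by (intro linear_compose proj_linear K adjoint_linear lPhi)
    then show ?thesis unfolding M_def
      using real_vector.module_hom_add[OF _ proj_linear[OF K']] by (simp add: o_def)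
  qed
  have key: "x \<in> K \<and> proj K (adjoint \<Phi> (\<Phi> x)) = proj K g"
    if "M x = proj K g" for x g
  proof -
    have "(proj K (adjoint \<Phi> (\<Phi> (proj K x))) - proj K g) + proj (orthogonal_comp K) x = 0"
      using that unfolding M_def by (simp add: algebra_simps)
    moreover have "proj K (adjoint \<Phi> (\<Phi> (proj K x))) - proj K g \<in> K"
      using proj_in[OF K] K by (simp add: subspace_diff)
    ultimately have 1: "proj K (adjoint \<Phi> (\<Phi> (proj K x))) - proj K g = 0"
      and 2: "proj (orthogonal_comp K) x = 0"
      using orth_split[OF K] proj_in[OF K'] by blast+
    from 2 have "x = proj K x" using proj_comp[OF K] by simp
    then have xK: "x \<in> K" using proj_in[OF K] by metis
    have "proj K x = x" by (rule proj_id[OF K xK])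
    with 1 xK show ?thesis by simp
  qed
  have "inj M"
  proof (rule linear_inj_on_iff_eq_0[THEN iffD2, OF lM subspace_UNIV], intro ballI impI)
    fix x assume "M x = 0"
    then have "M x = proj K 0" using proj_id[OF K subspace_0[OF K]] by simp
    from key[OF this] have xK: "x \<in> K" and z: "proj K (adjoint \<Phi> (\<Phi> x)) = proj K 0" by auto
    have "inner (\<Phi> x) (\<Phi> x) = inner x (adjoint \<Phi> (\<Phi> x))" by (simp add: adjoint_works[OF lPhi])
    also have "\<dots> = inner (proj K x) (adjoint \<Phi> (\<Phi> x))" using proj_id[OF K xK] by simp
    also have "\<dots> = inner x (proj K (adjoint \<Phi> (\<Phi> x)))" by (rule proj_sym[OF K])
    also have "\<dots> = 0" using z proj_id[OF K subspace_0[OF K]] by simp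
    finally have "\<Phi> x = 0" by simp
    then show "x = 0" using Phi0 xK by blast
  qed
  then have "surj M" using eucl.linear_inj_imp_surj[OF lM] by blast
  then obtain x0 where "M x0 = proj K h" by (metis surjD)
  from key[OF this] have x0K: "x0 \<in> K" and opt0: "proj K (adjoint \<Phi> (\<Phi> x0)) = proj K h" by auto
  have opt: "inner (adjoint \<Phi> (\<Phi> x0) - h) y = 0" if "y \<in> K" for y
  proof -
    have "inner (adjoint \<Phi> (\<Phi> x0) - h) y = inner (adjoint \<Phi> (\<Phi> x0) - h) (proj K y)"
      using proj_id[OF K that] by simp
    also have "\<dots> = inner (proj K (adjoint \<Phi> (\<Phi> x0) - h)) y"
      by (simp add: proj_sym[OF K])
    also have "\<dots> = 0" using opt0 linear_diff[OF proj_linear[OF K]] by simp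
    finally show ?thesis .
  qed
  define q where "q x = (1/2) * (norm (\<Phi> x))\<^sup>2 - inner h x" for x
  have qeq: "q y = q x0 + (1/2) * (norm (\<Phi> (y - x0)))\<^sup>2" if "y \<in> K" for y
  proof -
    have d: "y - x0 \<in> K" using that x0K K by (simp add: subspace_diff)
    have a: "inner (\<Phi> x0) (\<Phi> (y - x0)) = inner (adjoint \<Phi> (\<Phi> x0)) (y - x0)"
    proof -
      have "inner (y - x0) (adjoint \<Phi> (\<Phi> x0)) = inner (\<Phi> (y - x0)) (\<Phi> x0)"
        by (rule adjoint_works[OF lPhi])
      then show ?thesis by (simp only: inner_commute)
    qed
    have b: "inner (adjoint \<Phi> (\<Phi> x0)) (y - x0) = inner h (y - x0)"
      using opt[OF d] by (simp add: inner_diff_left)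
    have c: "\<Phi> y = \<Phi> x0 + \<Phi> (y - x0)" using linear_diff[OF lPhi] by simp
    have e: "(norm (\<Phi> x0 + \<Phi> (y - x0)))\<^sup>2 = (norm (\<Phi> x0))\<^sup>2 + 2 * inner (\<Phi> x0) (\<Phi> (y - x0)) + (norm (\<Phi> (y - x0)))\<^sup>2"
      by (simp add: power2_norm_eq_inner inner_add_left inner_add_right inner_commute)
    have f: "inner h y = inner h x0 + inner h (y - x0)" by (simp add: inner_diff_right)
    show ?thesis unfolding q_def c e f using a b by (simp add: distrib_left)
  qed
  have ismin: "x0 \<in> K \<and> (\<forall>x'\<in>K. q x0 \<le> q x')"
  proof (intro conjI ballI x0K)
    fix x' assume "x' \<in> K"
    have "q x' = q x0 + (1/2) * (norm (\<Phi> (x' - x0)))\<^sup>2" by (rule qeq[OF \<open>x' \<in> K\<close>])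
    moreover have "0 \<le> (1/2) * (norm (\<Phi> (x' - x0)))\<^sup>2" by simp
    ultimately show "q x0 \<le> q x'" by linarith
  qed
  have uniq: "x = x0" if "x \<in> K \<and> (\<forall>x'\<in>K. q x \<le> q x')" for x
  proof -
    have "q x \<le> q x0" using that x0K by blast
    moreover have "q x = q x0 + (1/2) * (norm (\<Phi> (x - x0)))\<^sup>2" using qeq that by blast
    ultimately have "(norm (\<Phi> (x - x0)))\<^sup>2 \<le> 0" by linarith
    then have "\<Phi> (x - x0) = 0" by simp
    moreover have "x - x0 \<in> K" using that x0K K by (simp add: subspace_diff)
    ultimately have "x - x0 = 0" using Phi0 by blast
    then show ?thesis by simp
  qed
  have "Xi \<Phi> L S h = x0"
    unfolding Xi_def K_def[symmetric] q_def[symmetric]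
    by (rule the_equality[where P="\<lambda>x. x \<in> K \<and> (\<forall>x'\<in>K. q x \<le> q x')", OF ismin uniq])
  show ?thesis unfolding \<open>Xi \<Phi> L S h = x0\<close> K_def[symmetric] using x0K opt by blast
qed

lemma pinv_prop:
  fixes f :: "'p::euclidean_space \<Rightarrow> 'n::euclidean_space"
  assumes lf: "linear f"
  shows "pinv f y \<in> orthogonal_comp (ker f) \<and> f (pinv f y) = proj (range f) y"
proof -
  have R: "subspace (range f)" by (rule real_vector.linear_subspace_image[OF lf subspace_UNIV])
  have Kf: "subspace (ker f)" by (rule ker_subspace[OF lf])
  obtain a where a: "proj (range f) y = f a" using proj_in[OF R] by blast
  define x where "x = proj (orthogonal_comp (ker f)) a"
  have x1: "x \<in> orthogonal_comp (ker f)" unfolding x_def by (rule proj_in[OF subspace_orthogonal_comp])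
  have "f (proj (ker f) a) = 0" using proj_in[OF Kf] unfolding ker_def by blast
  then have x2: "f x = proj (range f) y" unfolding x_def proj_comp[OF Kf] a
    using linear_diff[OF lf] by simp
  have u: "x' = x" if "x' \<in> orthogonal_comp (ker f) \<and> f x' = proj (range f) y" for x'
  proof -
    have "f (x' - x) = 0" using that x2 linear_diff[OF lf] by simp
    then have "x' - x \<in> ker f" by (simp add: ker_def)
    moreover have "x' - x \<in> orthogonal_comp (ker f)"
      using that x1 subspace_diff[OF subspace_orthogonal_comp] by blast
    ultimately have "x' - x \<in> ker f \<inter> orthogonal_comp (ker f)" by blast
    then have "x' - x = 0" using orthogonal_Int_0[OF Kf] by blast
    then show ?thesis by simp
  qed
  have "pinv f y = x" unfolding pinv_def
  proof (rule the_equality)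
    show "x \<in> orthogonal_comp (ker f) \<and> f x = proj (range f) y" using x1 x2 by (rule conjI)
    show "\<And>x'. x' \<in> orthogonal_comp (ker f) \<and> f x' = proj (range f) y \<Longrightarrow> x' = x" by (rule u)
  qed
  then show ?thesis using x1 x2 by simp
qed

lemma pinv_range:
  fixes f :: "'p::euclidean_space \<Rightarrow> 'n::euclidean_space"
  assumes lf: "linear f" and "y \<in> range f"
  shows "f (pinv f y) = y"
  using pinv_prop[OF lf] proj_id[OF real_vector.linear_subspace_image[OF lf subspace_UNIV] assms(2)]
  by simp

lemma range_LS:
  fixes L :: "'p::euclidean_space \<Rightarrow> 'n::euclidean_space"
  assumes lL: "linear L" and S: "subspace S"
    and v: "v \<in> orthogonal_comp (ker (\<lambda>x. proj S (adjoint L x)))"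
  shows "v \<in> range (\<lambda>a. L (proj S a))"
proof -
  define f where "f = (\<lambda>a. L (proj S a))"
  have lf: "linear f" unfolding f_def by (rule lin_LP[OF lL S])
  have R: "subspace (range f)" by (rule real_vector.linear_subspace_image[OF lf subspace_UNIV])
  define p where "p = proj (range f) v"
  define q where "q = v - p"
  have qo: "inner (f a) q = 0" for a
    using proj_orth[OF R, of "f a" v] unfolding q_def p_def by (simp add: inner_commute)
  have "inner a (proj S (adjoint L q)) = 0" for a
  proof -
    have "inner a (proj S (adjoint L q)) = inner (proj S a) (adjoint L q)" by (simp add: proj_sym[OF S])
    also have "\<dots> = inner (f a) q" unfolding f_def by (simp add: adjoint_works[OF lL])
    finally show ?thesis using qo by simp
  qed
  then have "inner (proj S (adjoint L q)) (proj S (adjoint L q)) = 0" by blast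
  then have "proj S (adjoint L q) = 0" by simp
  then have "q \<in> ker (\<lambda>x. proj S (adjoint L x))" by (simp add: ker_def)
  then have "inner q v = 0" using v unfolding orthogonal_comp_def orthogonal_def by blast
  moreover have "inner q p = 0"
  proof -
    obtain b where "p = f b" using proj_in[OF R, of v] unfolding p_def by blast
    then show ?thesis using qo[of b] by (simp add: inner_commute)
  qed
  moreover have "inner q q = inner q v - inner q p" by (simp add: q_def inner_diff_right)
  ultimately have "inner q q = 0" by simp
  then have "q = 0" by simp
  then have "v = p" using q_def by simp
  moreover have "p \<in> range f" using proj_in[OF R, of v] unfolding p_def .
  ultimately have "v \<in> range f" by simp
  then show ?thesis unfolding f_def .
qed



lemma numeric:
  fixes \<epsilon> c n t Z q :: real
  assumes e: "\<epsilon> > 0" and c: "c > 0" and n: "n \<ge> 0" and t: "t \<ge> 0" and Z: "Z \<ge> 0" and q: "q > 0"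
    and H: "t\<^sup>2/2 + c*\<epsilon>*(q*Z - n*\<epsilon> - n*t) \<le> \<epsilon>\<^sup>2/2"
  shows "t \<le> (1 + 2*(c*n))*\<epsilon>" and "Z \<le> \<epsilon>*(1+c*n)\<^sup>2/(2*c*q)"
proof -
  define a where "a = c*n"
  have a: "a \<ge> 0" unfolding a_def using c n by simp
  have ceq: "c*\<epsilon>*q*Z \<ge> 0" using c e q Z by simp
  have H': "t\<^sup>2/2 + c*\<epsilon>*q*Z - a*\<epsilon>*\<epsilon> - a*\<epsilon>*t \<le> \<epsilon>\<^sup>2/2"
    using H unfolding a_def by (simp add: algebra_simps)
  have "(t - (1+2*a)*\<epsilon>) * (t + \<epsilon>) = t\<^sup>2 - 2*a*\<epsilon>*t - (1+2*a)*\<epsilon>\<^sup>2"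
    by (simp add: algebra_simps power2_eq_square)
  also have "\<dots> \<le> 0" using H' ceq by (simp add: power2_eq_square algebra_simps)
  finally have "(t - (1+2*a)*\<epsilon>) * (t + \<epsilon>) \<le> 0" .
  moreover have "t + \<epsilon> > 0" using t e by simp
  ultimately have "t - (1+2*a)*\<epsilon> \<le> 0" by (simp add: mult_le_0_iff)
  then show "t \<le> (1 + 2*(c*n))*\<epsilon>" unfolding a_def by simp
  have sq: "a*\<epsilon>*t - t\<^sup>2/2 \<le> a\<^sup>2*\<epsilon>\<^sup>2/2"
  proof -
    have "0 \<le> (t - a*\<epsilon>)\<^sup>2" by simp
    then show ?thesis by (simp add: power2_eq_square algebra_simps)
  qed
  have "c*\<epsilon>*q*Z \<le> \<epsilon>\<^sup>2/2 + a*\<epsilon>*\<epsilon> + (a*\<epsilon>*t - t\<^sup>2/2)" using H' by simp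
  also have "\<dots> \<le> \<epsilon>\<^sup>2/2 + a*\<epsilon>*\<epsilon> + a\<^sup>2*\<epsilon>\<^sup>2/2" using sq by simp
  also have "\<dots> = \<epsilon> * (\<epsilon>*(1+a)\<^sup>2/2)" by (simp add: power2_eq_square algebra_simps)
  finally have "\<epsilon> * (c*q*Z) \<le> \<epsilon> * (\<epsilon>*(1+a)\<^sup>2/2)" by (simp add: algebra_simps)
  then have "c*q*Z \<le> \<epsilon>*(1+a)\<^sup>2/2" using e by simp
  then have "Z * (2*c*q) \<le> \<epsilon>*(1+a)\<^sup>2" by (simp add: algebra_simps)
  then show "Z \<le> \<epsilon>*(1+c*n)\<^sup>2/(2*c*q)" unfolding a_def using c q by (simp add: pos_le_divide_eq)
qed



lemma aux: "(U/V) * (2*A/D*e) = (2*U/V)*A/D*(e::real)" by (simp add: mult_ac)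

lemma core:
  fixes \<Phi> :: "'n::euclidean_space \<Rightarrow> 'm::euclidean_space"
    and L :: "'p::euclidean_space \<Rightarrow> 'n"
    and nA :: "'p \<Rightarrow> real"
    and x0 :: 'n and T0 :: "'p set" and e0 :: 'p
  assumes lPhi: "linear \<Phi>" and lL: "linear L" and N: "is_norm nA"
    and dec: "decomposable_at nA (adjoint L x0) T0 e0"
    and inj: "inj_on \<Phi> (ker (\<lambda>x. proj (orthogonal_comp T0) (adjoint L x)))"
    and m: "m > 0" "\<And>x. m * norm x \<le> nA x"
    and e1: "e1 > 0" "\<And>x. x \<in> orthogonal_comp (ker (\<lambda>x. proj (orthogonal_comp T0) (adjoint L x)))
               \<Longrightarrow> e1 * norm x \<le> norm (proj (orthogonal_comp T0) (adjoint L x))"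
    and e2: "e2 > 0" "\<And>x. x \<in> ker (\<lambda>x. proj (orthogonal_comp T0) (adjoint L x))
               \<Longrightarrow> e2 * norm x \<le> norm (\<Phi> x)"
    and B: "B > 0" "\<And>x. norm (\<Phi> x) \<le> B * norm x"
    and ub: "ubar \<in> ker (\<lambda>a. L (proj (orthogonal_comp T0) a))"
    and zb: "adjoint \<Phi> zbar \<in> range (\<lambda>a. L (proj (orthogonal_comp T0) a))"
    and IC1: "IC nA \<Phi> L ubar zbar T0 e0 < 1"
  shows "let \<eta> = \<Phi> (Xi \<Phi> L (orthogonal_comp T0) (L (proj T0 e0))) + zbar in
      (\<exists>\<alpha>\<in>subdiff nA (adjoint L x0).
          adjoint \<Phi> \<eta> = L \<alpha> \<and> dual_norm nA (proj (orthogonal_comp T0) \<alpha>) < 1)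
    \<and> (\<forall>\<epsilon>>0. \<forall>w. norm w \<le> \<epsilon> \<longrightarrow> (\<forall>c>0. \<forall>xs.
          (\<forall>x. (1/2) * (norm (\<Phi> x0 + w - \<Phi> xs))\<^sup>2 + (c * \<epsilon>) * nA (adjoint L xs)
               \<le> (1/2) * (norm (\<Phi> x0 + w - \<Phi> x))\<^sup>2 + (c * \<epsilon>) * nA (adjoint L x))
          \<longrightarrow> norm (xs - x0) \<le>
              ((2/e2) * (2 + c * norm \<eta>)
               + (2*(1 + B/e2)/(e1*m)) * (1 + c * norm \<eta> / 2)\<^sup>2 / (c * (1 - IC nA \<Phi> L ubar zbar T0 e0))) * \<epsilon>))"
proof -
  let ?S = "orthogonal_comp T0"
  let ?K = "ker (\<lambda>x. proj ?S (adjoint L x))"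
  let ?LS = "\<lambda>a. L (proj ?S a)"
  let ?u0 = "adjoint L x0"
  let ?IC = "IC nA \<Phi> L ubar zbar T0 e0"
  have T0: "subspace T0" and e0T: "e0 \<in> T0"
    and SD: "subdiff nA ?u0 = {\<alpha>. proj T0 \<alpha> = e0 \<and> dual_norm nA (proj ?S \<alpha>) \<le> 1}"
    and DII: "\<And>z. z \<in> ?S \<Longrightarrow> nA z = Sup {inner v z | v. v \<in> ?S \<and> dual_norm nA v \<le> 1}"
    using dec unfolding decomposable_at_def by blast+
  have S: "subspace ?S" by (rule subspace_orthogonal_comp)
  have SS: "orthogonal_comp ?S = T0" by (rule orthogonal_comp_self[OF T0])
  have lLS: "linear ?LS" by (rule lin_LP[OF lL S])
  have lg: "linear (\<lambda>x. proj ?S (adjoint L x))" by (rule lin_PL[OF lL S])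
  have K: "subspace ?K" by (rule ker_subspace[OF lg])
  have lLa: "linear (adjoint L)" by (rule adjoint_linear[OF lL])
  have lPa: "linear (adjoint \<Phi>)" by (rule adjoint_linear[OF lPhi])
  have pS: "linear (proj ?S)" by (rule proj_linear[OF S])
  have orthS: "inner a b = 0" if "a \<in> T0" "b \<in> ?S" for a b
    using that unfolding orthogonal_comp_def orthogonal_def by blast
  have projs: "proj T0 (e0 + v) = e0 \<and> proj ?S (e0 + v) = v" if vS: "v \<in> ?S" for v
  proof
    show "proj T0 (e0 + v) = e0"
    proof (rule proj_eqI[OF T0 e0T])
      fix w assume "w \<in> T0"
      then have "inner w v = 0" by (rule orthS[OF _ vS])
      then show "inner (e0 + v - e0) w = 0" by (simp add: inner_commute)
    qed
    show "proj ?S (e0 + v) = v"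
    proof (rule proj_eqI[OF S vS])
      fix w assume "w \<in> ?S"
      then show "inner (e0 + v - v) w = 0" using orthS[OF e0T] by simp
    qed
  qed
  have inSD: "e0 + v \<in> subdiff nA ?u0" if "v \<in> ?S" "dual_norm nA v \<le> 1" for v
    unfolding SD using projs[OF that(1)] that(2) by simp
  have S_inner: "inner v (proj ?S u) = inner v u" if "v \<in> ?S" for v u
    using proj_sym[OF S, of v u] proj_id[OF S that] by simp
  have u0S: "proj ?S ?u0 = 0"
  proof (rule ccontr)
    define v where "v = proj ?S ?u0"
    assume "proj ?S ?u0 \<noteq> 0"
    then have v0: "v \<noteq> 0" unfolding v_def .
    have vS: "v \<in> ?S" unfolding v_def by (rule proj_in[OF S])
    define t where "t = m / norm v"
    have t: "t > 0" unfolding t_def using m v0 by simp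
    have tvS: "t *\<^sub>R v \<in> ?S" using vS S by (simp add: subspace_scale)
    have "dual_norm nA (t *\<^sub>R v) \<le> 1"
    proof (rule dual_leI[OF N])
      fix x assume x: "nA x \<le> 1"
      have "inner (t *\<^sub>R v) x \<le> norm (t *\<^sub>R v) * norm x" by (rule norm_cauchy_schwarz)
      also have "norm (t *\<^sub>R v) = m" unfolding t_def using v0 m by simp
      also have "m * norm x \<le> 1" using m(2)[of x] x by simp
      finally show "inner (t *\<^sub>R v) x \<le> 1" .
    qed
    then have b1: "e0 + t *\<^sub>R v \<in> subdiff nA ?u0" by (rule inSD[OF tvS])
    have b0: "e0 + 0 \<in> subdiff nA ?u0" by (rule inSD) (use S subspace_0 dual_zero[OF N] in auto)
    have "inner (e0 + t *\<^sub>R v) ?u0 = inner (e0 + 0) ?u0"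
      using subdiff_eq[OF N b1] subdiff_eq[OF N b0] by simp
    then have "t * inner v ?u0 = 0" by (simp add: inner_add_left)
    then have "inner v ?u0 = 0" using t by simp
    moreover have "inner v ?u0 = inner v v" using S_inner[OF vS, of ?u0] unfolding v_def by simp
    ultimately show False using v0 by simp
  qed
  define x where "x = Xi \<Phi> L ?S (L (proj T0 e0))"
  define \<eta> where "\<eta> = \<Phi> x + zbar"
  have pe: "proj T0 e0 = e0" by (rule proj_id[OF T0 e0T])
  have Xi: "x \<in> ?K \<and> (\<forall>y\<in>?K. inner (adjoint \<Phi> (\<Phi> x) - L (proj T0 e0)) y = 0)"
    unfolding x_def by (rule Xi_prop[OF lPhi lL S inj])
  have yr: "adjoint \<Phi> (\<Phi> x) - L e0 \<in> range ?LS"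
  proof (rule range_LS[OF lL S])
    show "adjoint \<Phi> (\<Phi> x) - L e0 \<in> orthogonal_comp ?K"
      using Xi pe unfolding orthogonal_comp_def orthogonal_def by (simp add: inner_commute)
  qed
  define s where "s = Gamma \<Phi> L T0 e0 + proj ?S ubar + pinv ?LS (adjoint \<Phi> zbar)"
  have Gam: "Gamma \<Phi> L T0 e0 = pinv ?LS (adjoint \<Phi> (\<Phi> x) - L e0)"
    unfolding Gamma_def Let_def x_def pe ..
  have ICs: "?IC = dual_norm nA s" unfolding IC_def Let_def s_def ..
  have pinvS: "pinv ?LS y \<in> ?S" for y
  proof -
    have "T0 \<subseteq> ker ?LS"
    proof
      fix a assume "a \<in> T0"
      then have "proj ?S a = 0" using proj_zero[OF S] SS by simp
      then show "a \<in> ker ?LS" using linear_0[OF lL] by (simp add: ker_def)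
    qed
    then have "orthogonal_comp (ker ?LS) \<subseteq> ?S" by (rule orthogonal_comp_anti_mono)
    then show ?thesis using pinv_prop[OF lLS, of y] by blast
  qed
  have sS: "s \<in> ?S" unfolding s_def Gam
    by (intro subspace_add[OF S] pinvS proj_in[OF S])
  define \<alpha> where "\<alpha> = e0 + s"
  have pa: "proj T0 \<alpha> = e0" "proj ?S \<alpha> = s" using projs[OF sS] unfolding \<alpha>_def by auto
  have dsl: "dual_norm nA s < 1" using IC1 ICs by simp
  have aSD: "\<alpha> \<in> subdiff nA ?u0" unfolding \<alpha>_def using inSD[OF sS] dsl by simp
  have La: "L \<alpha> = adjoint \<Phi> \<eta>"
  proof -
    have ps: "proj ?S s = s" by (rule proj_id[OF S sS])
    have "L s = ?LS s" using ps by simp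
    also have "\<dots> = ?LS (Gamma \<Phi> L T0 e0) + ?LS (proj ?S ubar) + ?LS (pinv ?LS (adjoint \<Phi> zbar))"
      unfolding s_def using linear_add[OF lLS] by simp
    also have "?LS (Gamma \<Phi> L T0 e0) = adjoint \<Phi> (\<Phi> x) - L e0"
      unfolding Gam by (rule pinv_range[OF lLS yr])
    also have "?LS (proj ?S ubar) = 0"
      using ub proj_id[OF S proj_in[OF S]] by (simp add: ker_def)
    also have "?LS (pinv ?LS (adjoint \<Phi> zbar)) = adjoint \<Phi> zbar"
      by (rule pinv_range[OF lLS zb])
    finally have "L s = adjoint \<Phi> (\<Phi> x) - L e0 + adjoint \<Phi> zbar" by simp
    then show ?thesis unfolding \<alpha>_def \<eta>_def using linear_add[OF lL] linear_add[OF lPa] by simp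
  qed
  have partA: "\<exists>\<alpha>\<in>subdiff nA ?u0. adjoint \<Phi> \<eta> = L \<alpha> \<and> dual_norm nA (proj ?S \<alpha>) < 1"
  proof (rule bexI[OF _ aSD])
    show "adjoint \<Phi> \<eta> = L \<alpha> \<and> dual_norm nA (proj ?S \<alpha>) < 1"
      using La pa(2) dsl by simp
  qed
  have keyineq: "nA (adjoint L xs) \<ge> inner \<alpha> (adjoint L xs) + (1 - ?IC) * nA (proj ?S (adjoint L xs))" for xs
  proof -
    let ?us = "adjoint L xs"
    let ?z = "proj ?S ?us"
    have zS: "?z \<in> ?S" by (rule proj_in[OF S])
    have bnd: "inner v ?z \<le> nA ?us - inner \<alpha> ?us + ?IC * nA ?z" if "v \<in> ?S" "dual_norm nA v \<le> 1" for v
    proof -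
      have "inner (e0 + v) ?us \<le> nA ?us" by (rule subdiff_le[OF N inSD[OF that]])
      moreover have "inner s ?us \<le> ?IC * nA ?z"
        using inner_le_dual[OF N, of s ?z] S_inner[OF sS, of ?us] ICs by simp
      moreover have "inner v ?us = inner v ?z" using S_inner[OF that(1)] by simp
      ultimately show ?thesis unfolding \<alpha>_def by (simp add: inner_add_left)
    qed
    have "Sup {inner v ?z | v. v \<in> ?S \<and> dual_norm nA v \<le> 1} \<le> nA ?us - inner \<alpha> ?us + ?IC * nA ?z"
    proof (rule cSup_least)
      show "{inner v ?z | v. v \<in> ?S \<and> dual_norm nA v \<le> 1} \<noteq> {}"
        using subspace_0[OF S] dual_zero[OF N] by auto
    next
      fix y assume "y \<in> {inner v ?z | v. v \<in> ?S \<and> dual_norm nA v \<le> 1}"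
      then show "y \<le> nA ?us - inner \<alpha> ?us + ?IC * nA ?z" using bnd by blast
    qed
    then have "nA ?z \<le> nA ?us - inner \<alpha> ?us + ?IC * nA ?z" using DII[OF zS] by simp
    then show ?thesis by (simp add: algebra_simps)
  qed
  have partB: "norm (xs - x0) \<le>
              ((2/e2) * (2 + c * norm \<eta>)
               + (2*(1 + B/e2)/(e1*m)) * (1 + c * norm \<eta> / 2)\<^sup>2 / (c * (1 - ?IC))) * \<epsilon>"
    if eps: "\<epsilon> > 0" and w: "norm w \<le> \<epsilon>" and c: "c > 0"
      and opt: "\<forall>x. (1/2) * (norm (\<Phi> x0 + w - \<Phi> xs))\<^sup>2 + (c * \<epsilon>) * nA (adjoint L xs)
               \<le> (1/2) * (norm (\<Phi> x0 + w - \<Phi> x))\<^sup>2 + (c * \<epsilon>) * nA (adjoint L x)"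
    for \<epsilon> w c xs
  proof -
    define d where "d = xs - x0"
    define r where "r = \<Phi> x0 + w - \<Phi> xs"
    define t where "t = norm r"
    define Z where "Z = nA (proj ?S (adjoint L xs))"
    define q where "q = 1 - ?IC"
    define n where "n = norm \<eta>"
    have q: "q > 0" unfolding q_def using IC1 by simp
    have Z0: "Z \<ge> 0" unfolding Z_def by (rule nA_nonneg[OF N])
    have Phid: "\<Phi> d = w - r"
      unfolding d_def r_def linear_diff[OF lPhi] by (simp add: algebra_simps)
    have o1: "(1/2) * t\<^sup>2 + (c*\<epsilon>) * nA (adjoint L xs) \<le> (1/2) * (norm w)\<^sup>2 + (c*\<epsilon>) * nA ?u0"
      using opt[rule_format, of x0] unfolding t_def r_def by simp
    have "inner \<alpha> (adjoint L xs) - inner \<alpha> ?u0 = inner \<alpha> (adjoint L d)"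
      unfolding d_def using linear_diff[OF lLa] by (simp add: inner_diff_right)
    also have "\<dots> = inner (L \<alpha>) d" by (rule adjoint_works[OF lL])
    also have "\<dots> = inner \<eta> (\<Phi> d)" unfolding La by (rule adjoint_clauses(2)[OF lPhi])
    finally have ia: "inner \<alpha> (adjoint L xs) - nA ?u0 = inner \<eta> (\<Phi> d)"
      using subdiff_eq[OF N aSD] by simp
    have ke: "nA (adjoint L xs) - nA ?u0 \<ge> inner \<eta> (\<Phi> d) + q * Z"
      using keyineq[of xs] ia unfolding q_def Z_def by simp
    have ie: "inner \<eta> (\<Phi> d) \<ge> - n*\<epsilon> - n*t"
    proof -
      have "inner \<eta> (\<Phi> d) = inner \<eta> w - inner \<eta> r" unfolding Phid by (simp add: inner_diff_right)
      moreover have "inner \<eta> w \<ge> - (n * \<epsilon>)"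
      proof -
        have "\<bar>inner \<eta> w\<bar> \<le> n * norm w" unfolding n_def by (rule Cauchy_Schwarz_ineq2)
        also have "\<dots> \<le> n * \<epsilon>" unfolding n_def using w by (simp add: mult_left_mono)
        finally show ?thesis by simp
      qed
      moreover have "inner \<eta> r \<le> n * t"
      proof -
        have "\<bar>inner \<eta> r\<bar> \<le> n * t" unfolding n_def t_def by (rule Cauchy_Schwarz_ineq2)
        then show ?thesis by simp
      qed
      ultimately show ?thesis by simp
    qed
    have ce: "c * \<epsilon> > 0" using c eps by simp
    have "c*\<epsilon>*(q*Z - n*\<epsilon> - n*t) \<le> c*\<epsilon>*(nA (adjoint L xs) - nA ?u0)"
      using ke ie ce by (intro mult_left_mono) simp_all
    moreover have "(norm w)\<^sup>2 \<le> \<epsilon>\<^sup>2" using w norm_ge_zero power_mono by blast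
    ultimately have H: "t\<^sup>2/2 + c*\<epsilon>*(q*Z - n*\<epsilon> - n*t) \<le> \<epsilon>\<^sup>2/2"
      using o1 by (simp add: algebra_simps)
    have n0: "n \<ge> 0" unfolding n_def by simp
    have t0: "t \<ge> 0" unfolding t_def by simp
    have tb: "t \<le> (1 + 2*(c*n))*\<epsilon>" and Zb: "Z \<le> \<epsilon>*(1+c*n)\<^sup>2/(2*c*q)"
      using numeric[OF eps c n0 t0 Z0 q H] by auto
    define dK where "dK = proj ?K d"
    define dP where "dP = d - dK"
    have dKK: "dK \<in> ?K" unfolding dK_def by (rule proj_in[OF K])
    have dPK: "dP \<in> orthogonal_comp ?K" unfolding dP_def dK_def using proj_comp[OF K, of d]
      proj_in[OF subspace_orthogonal_comp, of ?K d] by simp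
    have gd: "proj ?S (adjoint L d) = proj ?S (adjoint L xs)"
      unfolding d_def using linear_diff[OF lLa] linear_diff[OF pS] u0S by simp
    have gdK: "proj ?S (adjoint L dK) = 0" using dKK by (simp add: ker_def)
    have gdP: "proj ?S (adjoint L dP) = proj ?S (adjoint L xs)"
      unfolding dP_def using linear_diff[OF lLa] linear_diff[OF pS] gd gdK by simp
    have nz: "norm (proj ?S (adjoint L xs)) \<le> Z / m"
      using m(2)[of "proj ?S (adjoint L xs)"] m(1) unfolding Z_def by (simp add: field_simps)
    have ndP: "norm dP \<le> Z / (m * e1)"
    proof -
      have "e1 * norm dP \<le> Z / m" using e1(2)[OF dPK] gdP nz by simp
      then show ?thesis using e1(1) m(1) by (simp add: field_simps)
    qed
    have nPd: "norm (\<Phi> d) \<le> \<epsilon> + t" unfolding Phid t_def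
      using norm_triangle_ineq4[of w r] w by simp
    have ndK: "norm dK \<le> (\<epsilon> + t + B * norm dP) / e2"
    proof -
      have "\<Phi> dK = \<Phi> d - \<Phi> dP" unfolding dP_def using linear_diff[OF lPhi] by simp
      then have "norm (\<Phi> dK) \<le> norm (\<Phi> d) + norm (\<Phi> dP)" by (simp add: norm_triangle_ineq4)
      also have "\<dots> \<le> \<epsilon> + t + B * norm dP" using nPd B(2)[of dP] by simp
      finally have "e2 * norm dK \<le> \<epsilon> + t + B * norm dP" using e2(2)[OF dKK] by simp
      then show ?thesis using e2(1) by (simp add: field_simps)
    qed
    have "norm d \<le> norm dK + norm dP" unfolding dP_def using norm_triangle_ineq[of dK "d - dK"] by simp
    also have "\<dots> \<le> (\<epsilon> + t)/e2 + (B/e2) * norm dP + norm dP"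
    proof -
      have "(\<epsilon> + t + B * norm dP)/e2 = (\<epsilon>+t)/e2 + (B/e2)*norm dP" by (simp add: add_divide_distrib)
      then show ?thesis using ndK by linarith
    qed
    also have "\<dots> = (\<epsilon> + t)/e2 + (1 + B/e2) * norm dP" by (simp add: algebra_simps)
    also have "\<dots> \<le> (\<epsilon> + t)/e2 + (1 + B/e2) * (Z / (m * e1))"
      using ndP B(1) e2(1) by (intro add_left_mono mult_left_mono) simp_all
    also have "\<dots> \<le> (2/e2) * (2 + c*n) * \<epsilon> + (2*(1 + B/e2)/(e1*m)) * (1 + c*n/2)\<^sup>2 / (c*q) * \<epsilon>"
    proof (rule add_mono)
      have "\<epsilon> + t \<le> 2 * (2 + c*n) * \<epsilon>" using tb eps n0 c by (simp add: algebra_simps)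
      then have "(\<epsilon> + t)/e2 \<le> (2 * (2 + c*n) * \<epsilon>)/e2" using e2(1) by (intro divide_right_mono) simp_all
      moreover have "(2 * (2 + c*n) * \<epsilon>)/e2 = (2/e2) * (2 + c*n) * \<epsilon>" by simp
      ultimately show "(\<epsilon> + t)/e2 \<le> (2/e2) * (2 + c*n) * \<epsilon>" by simp
    next
      have cn: "c*n \<ge> 0" using c n0 by simp
      have sq: "(1 + c*n)\<^sup>2 \<le> 4 * (1 + c*n/2)\<^sup>2"
        using cn by (simp add: power2_eq_square algebra_simps)
      have "Z \<le> \<epsilon>*(1+c*n)\<^sup>2/(2*c*q)" by (rule Zb)
      also have "\<dots> \<le> \<epsilon>*(4 * (1 + c*n/2)\<^sup>2)/(2*c*q)"
        using sq eps c q by (intro divide_right_mono mult_left_mono) simp_all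
      also have "\<dots> = 2 * (1 + c*n/2)\<^sup>2 / (c*q) * \<epsilon>" using c q by (simp add: field_simps)
      finally have Z2: "Z \<le> 2 * (1 + c*n/2)\<^sup>2 / (c*q) * \<epsilon>" .
      have "(1 + B/e2) * (Z / (m * e1)) = ((1 + B/e2)/(e1*m)) * Z" by (simp add: field_simps)
      also have "\<dots> \<le> ((1 + B/e2)/(e1*m)) * (2 * (1 + c*n/2)\<^sup>2 / (c*q) * \<epsilon>)"
        using Z2 B(1) e2(1) e1(1) m(1) by (intro mult_left_mono) simp_all
      also have "\<dots> = (2*(1 + B/e2)/(e1*m)) * (1 + c*n/2)\<^sup>2 / (c*q) * \<epsilon>" by (rule aux)
      finally show "(1 + B/e2) * (Z / (m * e1)) \<le> (2*(1 + B/e2)/(e1*m)) * (1 + c*n/2)\<^sup>2 / (c*q) * \<epsilon>" .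
    qed
    also have "\<dots> = ((2/e2) * (2 + c * norm \<eta>)
               + (2*(1 + B/e2)/(e1*m)) * (1 + c * norm \<eta> / 2)\<^sup>2 / (c * (1 - ?IC))) * \<epsilon>"
      unfolding n_def q_def by (simp add: algebra_simps)
    finally show ?thesis unfolding d_def .
  qed
  show ?thesis unfolding Let_def x_def[symmetric] \<eta>_def[symmetric]
    using partA partB by blast
qed


theorem corollary3:
  fixes \<Phi> :: "'n::euclidean_space \<Rightarrow> 'm::euclidean_space"
    and L :: "'p::euclidean_space \<Rightarrow> 'n"
    and nA :: "'p \<Rightarrow> real"
    and x0 :: 'n and T0 :: "'p set" and e0 :: 'p
  assumes "linear \<Phi>" and "linear L" and "is_norm nA"
    and "decomposable_at nA (adjoint L x0) T0 e0"
    and "inj_on \<Phi> (ker (\<lambda>x. proj (orthogonal_comp T0) (adjoint L x)))"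
  shows "\<exists>C1>0. \<exists>C2>0. \<forall>ubar zbar.
    (ubar \<in> ker (\<lambda>a. L (proj (orthogonal_comp T0) a))
     \<and> adjoint \<Phi> zbar \<in> range (\<lambda>a. L (proj (orthogonal_comp T0) a))
     \<and> (\<forall>u z. u \<in> ker (\<lambda>a. L (proj (orthogonal_comp T0) a))
          \<longrightarrow> adjoint \<Phi> z \<in> range (\<lambda>a. L (proj (orthogonal_comp T0) a))
          \<longrightarrow> IC nA \<Phi> L ubar zbar T0 e0 \<le> IC nA \<Phi> L u z T0 e0)
     \<and> IC nA \<Phi> L ubar zbar T0 e0 < 1) \<longrightarrow>
    (let \<eta> = \<Phi> (Xi \<Phi> L (orthogonal_comp T0) (L (proj T0 e0))) + zbar in
      (\<exists>\<alpha>\<in>subdiff nA (adjoint L x0).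
          adjoint \<Phi> \<eta> = L \<alpha> \<and> dual_norm nA (proj (orthogonal_comp T0) \<alpha>) < 1)
    \<and> (\<forall>\<epsilon>>0. \<forall>w. norm w \<le> \<epsilon> \<longrightarrow> (\<forall>c>0. \<forall>xs.
          (\<forall>x. (1/2) * (norm (\<Phi> x0 + w - \<Phi> xs))\<^sup>2 + (c * \<epsilon>) * nA (adjoint L xs)
               \<le> (1/2) * (norm (\<Phi> x0 + w - \<Phi> x))\<^sup>2 + (c * \<epsilon>) * nA (adjoint L x))
          \<longrightarrow> norm (xs - x0) \<le>
              (C1 * (2 + c * norm \<eta>)
               + C2 * (1 + c * norm \<eta> / 2)\<^sup>2 / (c * (1 - IC nA \<Phi> L ubar zbar T0 e0))) * \<epsilon>)))"
proof -
  let ?S = "orthogonal_comp T0"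
  let ?K = "ker (\<lambda>x. proj ?S (adjoint L x))"
  have T0: "subspace T0" using assms(4) unfolding decomposable_at_def by blast
  have S: "subspace ?S" by (rule subspace_orthogonal_comp)
  have lg: "linear (\<lambda>x. proj ?S (adjoint L x))" by (rule lin_PL[OF assms(2) S])
  have K: "subspace ?K" by (rule ker_subspace[OF lg])
  obtain m where m: "m > 0" "\<And>x. m * norm x \<le> nA x" using nA_lower[OF assms(3)] by blast
  obtain B where B: "B > 0" "\<And>x. norm (\<Phi> x) \<le> B * norm x" using linear_bounded_pos[OF assms(1)] by blast
  have "\<exists>e>0. \<forall>x\<in>orthogonal_comp ?K. norm (proj ?S (adjoint L x)) \<ge> e * norm x"
  proof (rule injective_imp_isometric)
    show "closed (orthogonal_comp ?K)" by (rule closed_subspace[OF subspace_orthogonal_comp])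
    show "subspace (orthogonal_comp ?K)" by (rule subspace_orthogonal_comp)
    show "bounded_linear (\<lambda>x. proj ?S (adjoint L x))" using lg linear_conv_bounded_linear by blast
    show "\<forall>x\<in>orthogonal_comp ?K. proj ?S (adjoint L x) = 0 \<longrightarrow> x = 0"
    proof (intro ballI impI)
      fix x assume "x \<in> orthogonal_comp ?K" "proj ?S (adjoint L x) = 0"
      then have "x \<in> ?K \<inter> orthogonal_comp ?K" by (simp add: ker_def)
      then show "x = 0" using orthogonal_Int_0[OF K] by blast
    qed
  qed
  then obtain e1 where e1: "e1 > 0" "\<And>x. x \<in> orthogonal_comp ?K \<Longrightarrow> e1 * norm x \<le> norm (proj ?S (adjoint L x))"
    by blast
  have "\<exists>e>0. \<forall>x\<in>?K. norm (\<Phi> x) \<ge> e * norm x"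
  proof (rule injective_imp_isometric)
    show "closed ?K" by (rule closed_subspace[OF K])
    show "subspace ?K" by (rule K)
    show "bounded_linear \<Phi>" using assms(1) linear_conv_bounded_linear by blast
    show "\<forall>x\<in>?K. \<Phi> x = 0 \<longrightarrow> x = 0"
    proof (intro ballI impI)
      fix x assume x: "x \<in> ?K" "\<Phi> x = 0"
      have "0 \<in> ?K" by (rule subspace_0[OF K])
      moreover have "\<Phi> 0 = 0" by (rule linear_0[OF assms(1)])
      ultimately show "x = 0" using assms(5) x unfolding inj_on_def by metis
    qed
  qed
  then obtain e2 where e2: "e2 > 0" "\<And>x. x \<in> ?K \<Longrightarrow> e2 * norm x \<le> norm (\<Phi> x)"
    by blast
  show ?thesis
    apply (rule exI[of _ "2/e2"])
    apply (rule conjI)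
    using e2(1) apply simp
    apply (rule exI[of _ "2*(1 + B/e2)/(e1*m)"])
    apply (rule conjI)
    using e2(1) e1(1) m(1) B(1) apply (simp add: add_pos_pos)
    apply (intro allI impI)
    apply (rule core[OF assms m e1 e2 B])
      apply blast+
    done
qed

end
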